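(* Let $k\ge 2$, let $G$ be a finite simple graph, and let $c:V(G)\to\{1,\dots,k\}$ be a coloring with $|c^{-1}(1)|=|c^{-1}(2)|=\dots=|c^{-1}(k)|$. Then $c$ is a neighborhood-balanced $k$-coloring of $G$ if and only if $c$ is a closed neighborhood balanced $k$-coloring of the complement $\overline{G}$.
   Context: For a vertex $v$, $N(v)=\{u: uv\in E\}$ and $N[v]=N(v)\cup\{v\}$. A neighborhood-balanced $k$-coloring of a graph is a map $c:V\to\{1,\dots,k\}$ such that for every vertex $v$ the numbers $|\{u\in N(v): c(u)=i\}|$, $i=1,\dots,k$, are all equal. A closed neighborhood balanced $k$-coloring is defined in the same way with $N[v]$ in place of $N(v)$. *)

theory Defs
  imports Main
begin

definition simple_graph :: "'a set \<Rightarrow> ('a \<Rightarrow> 'a \<Rightarrow> bool) \<Rightarrow> bool" where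
  "simple_graph V E \<longleftrightarrow> finite V \<and> (\<forall>u v. E u v \<longrightarrow> u \<in> V \<and> v \<in> V)
     \<and> (\<forall>u v. E u v \<longrightarrow> E v u) \<and> (\<forall>v. \<not> E v v)"

definition compl_graph :: "'a set \<Rightarrow> ('a \<Rightarrow> 'a \<Rightarrow> bool) \<Rightarrow> 'a \<Rightarrow> 'a \<Rightarrow> bool" where
  "compl_graph V E u v \<longleftrightarrow> u \<in> V \<and> v \<in> V \<and> u \<noteq> v \<and> \<not> E u v"

definition nbhd :: "'a set \<Rightarrow> ('a \<Rightarrow> 'a \<Rightarrow> bool) \<Rightarrow> 'a \<Rightarrow> 'a set" where
  "nbhd V E v = {u \<in> V. E u v}"

definition closed_nbhd :: "'a set \<Rightarrow> ('a \<Rightarrow> 'a \<Rightarrow> bool) \<Rightarrow> 'a \<Rightarrow> 'a set" where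
  "closed_nbhd V E v = insert v (nbhd V E v)"

definition is_coloring :: "'a set \<Rightarrow> nat \<Rightarrow> ('a \<Rightarrow> nat) \<Rightarrow> bool" where
  "is_coloring V k c \<longleftrightarrow> (\<forall>v\<in>V. c v \<in> {1..k})"

definition nb_coloring :: "'a set \<Rightarrow> ('a \<Rightarrow> 'a \<Rightarrow> bool) \<Rightarrow> nat \<Rightarrow> ('a \<Rightarrow> nat) \<Rightarrow> bool" where
  "nb_coloring V E k c \<longleftrightarrow> is_coloring V k c \<and>
     (\<forall>v\<in>V. \<forall>i\<in>{1..k}. \<forall>j\<in>{1..k}.
        card {u \<in> nbhd V E v. c u = i} = card {u \<in> nbhd V E v. c u = j})"

definition cnb_coloring :: "'a set \<Rightarrow> ('a \<Rightarrow> 'a \<Rightarrow> bool) \<Rightarrow> nat \<Rightarrow> ('a \<Rightarrow> nat) \<Rightarrow> bool" where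
  "cnb_coloring V E k c \<longleftrightarrow> is_coloring V k c \<and>
     (\<forall>v\<in>V. \<forall>i\<in>{1..k}. \<forall>j\<in>{1..k}.
        card {u \<in> closed_nbhd V E v. c u = i} = card {u \<in> closed_nbhd V E v. c u = j})"

end

theory Submission
  imports Defs
begin

lemma key:
  assumes "simple_graph V E" "v \<in> V"
  shows "card {u \<in> closed_nbhd V (compl_graph V E) v. c u = i}
       = card {u \<in> V. c u = i} - card {u \<in> nbhd V E v. c u = i}"
    and "card {u \<in> nbhd V E v. c u = i} \<le> card {u \<in> V. c u = i}"
proof -
  have fin: "finite V" using assms(1) unfolding simple_graph_def by auto
  have nv: "\<not> E v v" using assms(1) unfolding simple_graph_def by auto
  have eq: "{u \<in> closed_nbhd V (compl_graph V E) v. c u = i}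
      = {u \<in> V. c u = i} - {u \<in> nbhd V E v. c u = i}"
    using assms(2) nv unfolding closed_nbhd_def nbhd_def compl_graph_def by auto
  have sub: "{u \<in> nbhd V E v. c u = i} \<subseteq> {u \<in> V. c u = i}"
    unfolding nbhd_def by auto
  have f2: "finite {u \<in> nbhd V E v. c u = i}"
    using fin unfolding nbhd_def by auto
  show "card {u \<in> closed_nbhd V (compl_graph V E) v. c u = i}
       = card {u \<in> V. c u = i} - card {u \<in> nbhd V E v. c u = i}"
    unfolding eq using card_Diff_subset[OF f2 sub] .
  show "card {u \<in> nbhd V E v. c u = i} \<le> card {u \<in> V. c u = i}"
    using card_mono[OF _ sub] fin by auto
qed

theorem theorem2p16:
  fixes V :: "'a set" and E :: "'a \<Rightarrow> 'a \<Rightarrow> bool" and k :: nat and c :: "'a \<Rightarrow> nat"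
  assumes "k \<ge> 2"
    and "simple_graph V E"
    and "is_coloring V k c"
    and "\<forall>i\<in>{1..k}. \<forall>j\<in>{1..k}. card {v \<in> V. c v = i} = card {v \<in> V. c v = j}"
  shows "nb_coloring V E k c \<longleftrightarrow> cnb_coloring V (compl_graph V E) k c"
proof -
  have "card {u \<in> nbhd V E v. c u = i} = card {u \<in> nbhd V E v. c u = j}
     \<longleftrightarrow> card {u \<in> closed_nbhd V (compl_graph V E) v. c u = i}
       = card {u \<in> closed_nbhd V (compl_graph V E) v. c u = j}"
    if "v \<in> V" "i \<in> {1..k}" "j \<in> {1..k}" for v i j
  proof -
    have "card {x \<in> V. c x = i} = card {x \<in> V. c x = j}" using assms(4) that by blast
    then show ?thesis
      using key[OF assms(2) that(1), of c i] key[OF assms(2) that(1), of c j] by linarith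
  qed
  then show ?thesis unfolding nb_coloring_def cnb_coloring_def using assms(3) by blast
qed

end
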